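(* The $3\times2\times3$ quaternion tensor $$T=\left(\begin{bmatrix}1&0&0\\0&1&0\\0&0&1\end{bmatrix};\begin{bmatrix}0&0&1\\0&1&0\\0&0&0\end{bmatrix}\right)$$ has $\mathrm{rank}(T)=4$.
   Context: $\mathbb{H}$ denotes the real quaternions. An $n_1\times n_2\times n_3$ quaternion tensor is an array $T=(T_{ijk})$ with entries in $\mathbb{H}$, $1\le i\le n_1$, $1\le j\le n_2$, $1\le k\le n_3$; it is written $T=(A_1;\dots;A_{n_2})$ where the frontal slice $A_j$ is the $n_1\times n_3$ matrix $(T_{ijk})_{i,k}$. A nonzero tensor is simple if $T_{ijk}=a_ib_jc_k$ (quaternion product in this order) for some $\vec a\in\mathbb{H}^{n_1},\vec b\in\mathbb{H}^{n_2},\vec c\in\mathbb{H}^{n_3}$. The rank of $T$ is the least number of simple tensors summing to $T$. *)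

theory Defs
  imports Complex_Main
begin

datatype quat = Quat (qRe: real) (qI: real) (qJ: real) (qK: real)

lemma quat_eqI: "qRe x = qRe y \<Longrightarrow> qI x = qI y \<Longrightarrow> qJ x = qJ y \<Longrightarrow> qK x = qK y \<Longrightarrow> x = y"
  by (cases x; cases y) auto

instantiation quat :: ring_1
begin

definition "0 = Quat 0 0 0 0"
definition "1 = Quat 1 0 0 0"
definition "x + y = Quat (qRe x + qRe y) (qI x + qI y) (qJ x + qJ y) (qK x + qK y)"
definition "- x = Quat (- qRe x) (- qI x) (- qJ x) (- qK x)"
definition "x - y = Quat (qRe x - qRe y) (qI x - qI y) (qJ x - qJ y) (qK x - qK y)"
text \<open>Hamilton product, with i^2 = j^2 = k^2 = ijk = -1.\<close>
definition "x * y = Quat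
   (qRe x * qRe y - qI x * qI y - qJ x * qJ y - qK x * qK y)
   (qRe x * qI y + qI x * qRe y + qJ x * qK y - qK x * qJ y)
   (qRe x * qJ y - qI x * qK y + qJ x * qRe y + qK x * qI y)
   (qRe x * qK y + qI x * qJ y - qJ x * qI y + qK x * qRe y)"

instance
  by standard (auto intro!: quat_eqI simp: zero_quat_def one_quat_def plus_quat_def
      uminus_quat_def minus_quat_def times_quat_def algebra_simps)

end

text \<open>An n1 x n2 x n3 quaternion tensor is represented by a function T with T i j k
  the entry at position (i,j,k), indices 0-based (i < n1, j < n2, k < n3);
  values outside this range are irrelevant.\<close>

definition simple_tensor :: "nat \<Rightarrow> nat \<Rightarrow> nat \<Rightarrow> (nat \<Rightarrow> nat \<Rightarrow> nat \<Rightarrow> quat) \<Rightarrow> bool" where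
  "simple_tensor n1 n2 n3 S \<longleftrightarrow>
     (\<exists>i<n1. \<exists>j<n2. \<exists>k<n3. S i j k \<noteq> 0) \<and>
     (\<exists>a b c :: nat \<Rightarrow> quat. \<forall>i<n1. \<forall>j<n2. \<forall>k<n3. S i j k = a i * b j * c k)"

definition tensor_rank :: "nat \<Rightarrow> nat \<Rightarrow> nat \<Rightarrow> (nat \<Rightarrow> nat \<Rightarrow> nat \<Rightarrow> quat) \<Rightarrow> nat" where
  "tensor_rank n1 n2 n3 T = (LEAST r. \<exists>S :: nat \<Rightarrow> nat \<Rightarrow> nat \<Rightarrow> nat \<Rightarrow> quat.
      (\<forall>l<r. simple_tensor n1 n2 n3 (S l)) \<and>
      (\<forall>i<n1. \<forall>j<n2. \<forall>k<n3. T i j k = (\<Sum>l<r. S l i j k)))"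

text \<open>The tensor of the theorem: frontal slice j=0 is the 3x3 identity,
  frontal slice j=1 has ones at (row 1, col 3) and (row 2, col 2) (1-based).\<close>

definition T14 :: "nat \<Rightarrow> nat \<Rightarrow> nat \<Rightarrow> quat" where
  "T14 i j k = (if j = 0 then (if i = k then 1 else 0)
               else (if (i = 0 \<and> k = 2) \<or> (i = 1 \<and> k = 1) then 1 else 0))"

end

theory Submission
  imports Defs
begin

definition qn :: "quat \<Rightarrow> real" where
  "qn q = qRe q ^ 2 + qI q ^ 2 + qJ q ^ 2 + qK q ^ 2"

definition qinv :: "quat \<Rightarrow> quat" where
  "qinv q = Quat (qRe q / qn q) (- qI q / qn q) (- qJ q / qn q) (- qK q / qn q)"

lemma qn_nz: assumes "q \<noteq> 0" shows "qn q \<noteq> 0"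
proof
  assume "qn q = 0"
  then have "qRe q = 0 \<and> qI q = 0 \<and> qJ q = 0 \<and> qK q = 0"
    unfolding qn_def by (smt (verit) zero_le_power2 power2_eq_square mult_eq_0_iff)
  then have "q = 0" by (auto intro!: quat_eqI simp: zero_quat_def)
  with assms show False by simp
qed

lemma qinv_l: assumes "q \<noteq> 0" shows "qinv q * q = 1"
proof -
  define s where "s = 1 / qn q"
  have ns: "(qRe q * qRe q + qI q * qI q + qJ q * qJ q + qK q * qK q) * s = 1"
    using qn_nz[OF assms] by (simp add: s_def qn_def power2_eq_square)
  have qi: "qinv q = Quat (qRe q * s) (- qI q * s) (- qJ q * s) (- qK q * s)"
    by (simp add: qinv_def s_def)
  show ?thesis unfolding qi using ns
    by (auto intro!: quat_eqI simp: times_quat_def one_quat_def algebra_simps)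
qed

lemma qinv_r: assumes "q \<noteq> 0" shows "q * qinv q = 1"
proof -
  define s where "s = 1 / qn q"
  have ns: "(qRe q * qRe q + qI q * qI q + qJ q * qJ q + qK q * qK q) * s = 1"
    using qn_nz[OF assms] by (simp add: s_def qn_def power2_eq_square)
  have qi: "qinv q = Quat (qRe q * s) (- qI q * s) (- qJ q * s) (- qK q * s)"
    by (simp add: qinv_def s_def)
  show ?thesis unfolding qi using ns
    by (auto intro!: quat_eqI simp: times_quat_def one_quat_def algebra_simps)
qed

lemma nozd: fixes x y :: quat assumes "x * y = 0" shows "x = 0 \<or> y = 0"
proof (cases "x = 0")
  case False
  have "y = qinv x * x * y" using qinv_l[OF False] by simp
  also have "\<dots> = 0" using assms by (simp add: mult.assoc)
  finally show ?thesis by simp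
qed simp

lemma pivot:
  fixes x0 x1 x2 y0 y1 y2 :: quat
  assumes "x0 \<noteq> 0"
  shows "\<exists>u0 u1 u2. (u1 \<noteq> 0 \<or> u2 \<noteq> 0) \<and> u0*x0+u1*x1+u2*x2 = 0 \<and> u0*y0+u1*y1+u2*y2 = 0"
proof -
  define z1 where "z1 = y1 - x1 * qinv x0 * y0"
  define z2 where "z2 = y2 - x2 * qinv x0 * y0"
  obtain v1 v2 where v: "v1 \<noteq> 0 \<or> v2 \<noteq> 0" "v1 * z1 + v2 * z2 = 0"
  proof (cases "z1 = 0")
    case True
    then show ?thesis using that[of 1 0] by simp
  next
    case False
    have "(- z2 * qinv z1) * z1 + 1 * z2 = 0"
      using qinv_l[OF False] by (simp add: mult.assoc)
    then show ?thesis using that[of "- z2 * qinv z1" 1] by simp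
  qed
  define u0 where "u0 = - (v1 * x1 + v2 * x2) * qinv x0"
  have "u0 * x0 + v1*x1+v2*x2 = 0"
    unfolding u0_def using qinv_l[OF assms] by (simp add: mult.assoc)
  moreover have "u0*y0+v1*y1+v2*y2 = v1 * z1 + v2 * z2"
    unfolding u0_def z1_def z2_def by (simp add: algebra_simps)
  ultimately show ?thesis using v by metis
qed

definition dot :: "(nat \<Rightarrow> quat) \<Rightarrow> (nat \<Rightarrow> quat) \<Rightarrow> quat" where
  "dot u x = u 0 * x 0 + u 1 * x 1 + u 2 * x 2"

definition nz :: "(nat \<Rightarrow> quat) \<Rightarrow> bool" where
  "nz u \<longleftrightarrow> u 0 \<noteq> 0 \<or> u 1 \<noteq> 0 \<or> u 2 \<noteq> 0"

lemma annih: "\<exists>u. nz u \<and> dot u x = 0 \<and> dot u y = 0"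
proof -
  have P: "\<exists>u. nz u \<and> dot u x = 0 \<and> dot u y = 0" if xnz: "x 0 \<noteq> 0 \<or> x 1 \<noteq> 0 \<or> x 2 \<noteq> 0" for x y
  proof -
    consider "x 0 \<noteq> 0" | "x 1 \<noteq> 0" | "x 2 \<noteq> 0" using xnz by blast
    then show ?thesis
    proof cases
      case 1
      from pivot[OF 1, of "x 1" "x 2" "y 0" "y 1" "y 2"] obtain u0 u1 u2 where
        "(u1 \<noteq> 0 \<or> u2 \<noteq> 0)" "u0*x 0+u1*x 1+u2*x 2 = 0" "u0*y 0+u1*y 1+u2*y 2 = 0" by blast
      then show ?thesis
        by (intro exI[of _ "(\<lambda>i. if i = 0 then u0 else if i = 1 then u1 else u2)"]) (auto simp: nz_def dot_def)
    next
      case 2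
      from pivot[OF 2, of "x 0" "x 2" "y 1" "y 0" "y 2"] obtain u0 u1 u2 where
        "(u1 \<noteq> 0 \<or> u2 \<noteq> 0)" "u0*x 1+u1*x 0+u2*x 2 = 0" "u0*y 1+u1*y 0+u2*y 2 = 0" by blast
      then show ?thesis
        by (intro exI[of _ "(\<lambda>i. if i = 0 then u1 else if i = 1 then u0 else u2)"]) (auto simp: nz_def dot_def algebra_simps)
    next
      case 3
      from pivot[OF 3, of "x 0" "x 1" "y 2" "y 0" "y 1"] obtain u0 u1 u2 where
        "(u1 \<noteq> 0 \<or> u2 \<noteq> 0)" "u0*x 2+u1*x 0+u2*x 1 = 0" "u0*y 2+u1*y 0+u2*y 1 = 0" by blast
      then show ?thesis
        by (intro exI[of _ "(\<lambda>i. if i = 0 then u1 else if i = 1 then u2 else u0)"]) (auto simp: nz_def dot_def algebra_simps)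
    qed
  qed
  show ?thesis
  proof (cases "x 0 \<noteq> 0 \<or> x 1 \<noteq> 0 \<or> x 2 \<noteq> 0")
    case True then show ?thesis using P by blast
  next
    case F: False
    show ?thesis
    proof (cases "y 0 \<noteq> 0 \<or> y 1 \<noteq> 0 \<or> y 2 \<noteq> 0")
      case True then show ?thesis using P[of y x] by blast
    next
      case False
      then show ?thesis using F
        by (intro exI[of _ "\<lambda>i. 1"]) (auto simp: nz_def dot_def)
    qed
  qed
qed

lemma sum3: "(\<Sum>l<(3::nat). f l) = f 0 + f 1 + (f 2 :: quat)"
  by (simp add: eval_nat_numeral)

lemma contr:
  assumes H: "\<forall>i<3. \<forall>j<2. \<forall>k<3. T14 i j k = (\<Sum>l<(3::nat). a l i * b l j * c l k)"
    and j: "j < 2" and k: "k < 3"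
  shows "u 0 * T14 0 j k + u 1 * T14 1 j k + u 2 * T14 2 j k
     = (\<Sum>l<3. dot u (a l) * b l j * c l k)"
  using H j k by (simp add: sum3 dot_def algebra_simps)

lemma eig:
  assumes H: "\<forall>i<3. \<forall>j<2. \<forall>k<3. T14 i j k = (\<Sum>l<(3::nat). a l i * b l j * c l k)"
    and l: "l < 3" and ann: "\<forall>l'<3. l' \<noteq> l \<longrightarrow> dot u (a l') = 0" and nzu: "nz u"
  shows "u 0 = 0 \<and> (u 1 = 0 \<or> u 2 = 0)"
proof -
  define \<alpha> where "\<alpha> = dot u (a l)"
  have single: "(\<Sum>l'<3. dot u (a l') * b l' j * c l' k) = \<alpha> * b l j * c l k" for j k
  proof -
    have "l = 0 \<or> l = 1 \<or> l = 2" using l by arith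
    then show ?thesis using ann unfolding \<alpha>_def sum3 by auto
  qed
  have E: "u 0 * T14 0 j k + u 1 * T14 1 j k + u 2 * T14 2 j k = \<alpha> * b l j * c l k"
    if "j < 2" "k < 3" for j k
    using contr[OF H that, of u] single by simp
  define p where "p = \<alpha> * b l 0"
  define q where "q = \<alpha> * b l 1"
  have e0: "u 0 = p * c l 0" using E[of 0 0] by (simp add: T14_def p_def)
  have e1: "u 1 = p * c l 1" using E[of 0 1] by (simp add: T14_def p_def)
  have e2: "u 2 = p * c l 2" using E[of 0 2] by (simp add: T14_def p_def)
  have f0: "0 = q * c l 0" using E[of 1 0] by (simp add: T14_def q_def)
  have f1: "u 1 = q * c l 1" using E[of 1 1] by (simp add: T14_def q_def)
  have f2: "u 0 = q * c l 2" using E[of 1 2] by (simp add: T14_def q_def)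
  have pnz: "p \<noteq> 0" using nzu e0 e1 e2 by (auto simp: nz_def)
  define m where "m = q * qinv p"
  have cc: "c l k = qinv p * u k" if "k < 3" for k
  proof -
    have "k = 0 \<or> k = 1 \<or> k = 2" using that by arith
    then have "u k = p * c l k" using e0 e1 e2 by auto
    then have "qinv p * u k = (qinv p * p) * c l k" by (simp add: mult.assoc)
    then show ?thesis using qinv_l[OF pnz] by simp
  qed
  have g0: "0 = m * u 0" using f0 cc[of 0] by (simp add: m_def mult.assoc)
  have g1: "u 1 = m * u 1" using f1 cc[of 1] by (simp add: m_def mult.assoc)
  have g2: "u 0 = m * u 2" using f2 cc[of 2] by (simp add: m_def mult.assoc)
  have u0: "u 0 = 0"
  proof (cases "m = 0")
    case True then show ?thesis using g2 by simp
  next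
    case False then show ?thesis using g0 nozd[of m "u 0"] by simp
  qed
  have "u 1 = 0 \<or> u 2 = 0"
  proof (cases "u 2 = 0")
    case False
    then have "m = 0" using g2 u0 nozd[of m "u 2"] by simp
    then show ?thesis using g1 by simp
  qed simp
  with u0 show ?thesis by simp
qed

lemma allann:
  assumes H: "\<forall>i<3. \<forall>j<2. \<forall>k<3. T14 i j k = (\<Sum>l<(3::nat). a l i * b l j * c l k)"
    and ann: "\<forall>l<3. dot u (a l) = 0"
  shows "\<not> nz u"
proof -
  have "u 0 * T14 0 0 k + u 1 * T14 1 0 k + u 2 * T14 2 0 k = 0" if "k < 3" for k
    using contr[OF H _ that, of 0 u] ann by (simp add: sum3)
  from this[of 0] this[of 1] this[of 2] show ?thesis by (simp add: T14_def nz_def)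
qed

lemma pair:
  assumes H: "\<forall>i<3. \<forall>j<2. \<forall>k<3. T14 i j k = (\<Sum>l<(3::nat). a l i * b l j * c l k)"
    and p: "p < 3" and v: "\<forall>i<3. i \<noteq> p \<longrightarrow> v i = 0" and w: "\<forall>i<3. i \<noteq> p \<longrightarrow> w i = 0"
    and nv: "nz v" and nw: "nz w" and st: "s \<noteq> t" "s < 3" "t < 3"
    and av: "\<forall>l<3. l \<noteq> s \<longrightarrow> dot v (a l) = 0"
    and aw: "\<forall>l<3. l \<noteq> t \<longrightarrow> dot w (a l) = 0"
  shows False
proof -
  have dv: "dot v x = v p * x p" for x
  proof -
    have "p = 0 \<or> p = 1 \<or> p = 2" using p by arith
    then show ?thesis using v by (auto simp: dot_def)
  qed
  have dw: "dot w x = w p * x p" for x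
  proof -
    have "p = 0 \<or> p = 1 \<or> p = 2" using p by arith
    then show ?thesis using w by (auto simp: dot_def)
  qed
  have wp: "w p \<noteq> 0"
  proof -
    have "p = 0 \<or> p = 1 \<or> p = 2" using p by arith
    then show ?thesis using w nw by (auto simp: nz_def)
  qed
  have "w p * a s p = 0" using aw st dw by metis
  then have "a s p = 0" using nozd wp by blast
  then have "dot v (a s) = 0" using dv by simp
  then have "\<forall>l<3. dot v (a l) = 0" using av by metis
  then show False using allann[OF H] nv by blast
qed

lemma no3: "\<not> (\<forall>i<3. \<forall>j<2. \<forall>k<3. T14 i j k = (\<Sum>l<(3::nat). a l i * b l j * c l k))"
proof
  assume H: "\<forall>i<3. \<forall>j<2. \<forall>k<3. T14 i j k = (\<Sum>l<(3::nat). a l i * b l j * c l k)"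
  obtain u0 where u0: "nz u0" "dot u0 (a 1) = 0" "dot u0 (a 2) = 0" using annih by blast
  obtain u1 where u1: "nz u1" "dot u1 (a 0) = 0" "dot u1 (a 2) = 0" using annih by blast
  obtain u2 where u2: "nz u2" "dot u2 (a 0) = 0" "dot u2 (a 1) = 0" using annih by blast
  have L3: "l = 0 \<or> l = 1 \<or> l = 2" if "l < (3::nat)" for l using that by arith
  have A0: "\<forall>l<3. l \<noteq> 0 \<longrightarrow> dot u0 (a l) = 0" using u0(2,3) L3 by blast
  have A1: "\<forall>l<3. l \<noteq> 1 \<longrightarrow> dot u1 (a l) = 0" using u1(2,3) L3 by blast
  have A2: "\<forall>l<3. l \<noteq> 2 \<longrightarrow> dot u2 (a l) = 0" using u2(2,3) L3 by blast
  have E0: "u0 0 = 0 \<and> (u0 1 = 0 \<or> u0 2 = 0)" using eig[OF H _ A0 u0(1)] by simp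
  have E1: "u1 0 = 0 \<and> (u1 1 = 0 \<or> u1 2 = 0)" using eig[OF H _ A1 u1(1)] by simp
  have E2: "u2 0 = 0 \<and> (u2 1 = 0 \<or> u2 2 = 0)" using eig[OF H _ A2 u2(1)] by simp
  have T1: "\<forall>i<3. i \<noteq> 1 \<longrightarrow> v i = 0" if "v 0 = 0" "v 2 = 0" for v :: "nat \<Rightarrow> quat"
    using that L3 by blast
  have T2: "\<forall>i<3. i \<noteq> 2 \<longrightarrow> v i = 0" if "v 0 = 0" "v 1 = 0" for v :: "nat \<Rightarrow> quat"
    using that L3 by blast
  note P = pair[OF H]
  have n01: "(0::nat) \<noteq> 1" and n02: "(0::nat) \<noteq> 2" and n12: "(1::nat) \<noteq> 2" by simp_all
  have l1: "(1::nat) < 3" and l2: "(2::nat) < 3" and l0: "(0::nat) < 3" by simp_all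
  show False
  proof (cases "u0 2 = 0")
    case a: True
    show False
    proof (cases "u1 2 = 0")
      case True
      show False by (rule P[OF l1 T1 T1 u0(1) u1(1) n01 l0 l1 A0 A1]) (use E0 E1 a True in blast)+
    next
      case b: False
      show False
      proof (cases "u2 2 = 0")
        case True
        show False by (rule P[OF l1 T1 T1 u0(1) u2(1) n02 l0 l2 A0 A2]) (use E0 E2 a True in blast)+
      next
        case False
        show False by (rule P[OF l2 T2 T2 u1(1) u2(1) n12 l1 l2 A1 A2]) (use E1 E2 b False in blast)+
      qed
    qed
  next
    case a: False
    show False
    proof (cases "u1 2 = 0")
      case b: True
      show False
      proof (cases "u2 2 = 0")
        case True
        show False by (rule P[OF l1 T1 T1 u1(1) u2(1) n12 l1 l2 A1 A2]) (use E1 E2 b True in blast)+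
      next
        case False
        show False by (rule P[OF l2 T2 T2 u0(1) u2(1) n02 l0 l2 A0 A2]) (use E0 E2 a False in blast)+
      qed
    next
      case False
      show False by (rule P[OF l2 T2 T2 u0(1) u1(1) n01 l0 l1 A0 A1]) (use E0 E1 a False in blast)+
    qed
  qed
qed

definition eV :: "nat \<Rightarrow> nat \<Rightarrow> quat" where "eV n i = (if i = n then 1 else 0)"

definition AA :: "nat \<Rightarrow> nat \<Rightarrow> quat" where
  "AA l = (if l = 0 then eV 0 else if l = 1 then eV 2 else if l = 2 then eV 0 else eV 1)"
definition BB :: "nat \<Rightarrow> nat \<Rightarrow> quat" where
  "BB l = (if l = 0 then eV 0 else if l = 1 then eV 0 else if l = 2 then eV 1 else (\<lambda>_. 1))"
definition CC :: "nat \<Rightarrow> nat \<Rightarrow> quat" where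
  "CC l = (if l = 0 then eV 0 else if l = 1 then eV 2 else if l = 2 then eV 2 else eV 1)"

lemma sum4: "(\<Sum>l<(4::nat). f l) = f 0 + f 1 + f 2 + (f 3 :: quat)"
  by (simp add: eval_nat_numeral)

lemma upper: "\<exists>S :: nat \<Rightarrow> nat \<Rightarrow> nat \<Rightarrow> nat \<Rightarrow> quat.
      (\<forall>l<4. simple_tensor 3 2 3 (S l)) \<and>
      (\<forall>i<3. \<forall>j<2. \<forall>k<3. T14 i j k = (\<Sum>l<4. S l i j k))"
proof (intro exI[of _ "\<lambda>l i j k. AA l i * BB l j * CC l k"] conjI allI impI)
  fix l :: nat assume "l < 4"
  then have "l = 0 \<or> l = 1 \<or> l = 2 \<or> l = 3" by arith
  have ex: "\<exists>i<3. \<exists>j<2. \<exists>k<3. AA l i * BB l j * CC l k \<noteq> 0"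
  proof -
    { assume "l = 0" then have "AA l 0 * BB l 0 * CC l 0 \<noteq> 0" by (simp add: AA_def BB_def CC_def eV_def) }
    moreover
    { assume "l = 1" then have "AA l 2 * BB l 0 * CC l 2 \<noteq> 0" by (simp add: AA_def BB_def CC_def eV_def) }
    moreover
    { assume "l = 2" then have "AA l 0 * BB l 1 * CC l 2 \<noteq> 0" by (simp add: AA_def BB_def CC_def eV_def) }
    moreover
    { assume "l = 3" then have "AA l 1 * BB l 0 * CC l 1 \<noteq> 0" by (simp add: AA_def BB_def CC_def eV_def) }
    moreover have "(0::nat) < 3" "(1::nat) < 3" "(2::nat) < 3" "(0::nat) < 2" "(1::nat) < 2" by simp_all
    ultimately show ?thesis using \<open>l = 0 \<or> l = 1 \<or> l = 2 \<or> l = 3\<close> by blast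
  qed
  then show "simple_tensor 3 2 3 (\<lambda>i j k. AA l i * BB l j * CC l k)"
    unfolding simple_tensor_def by blast
next
  fix i j k :: nat assume "i < 3" "j < 2" "k < 3"
  then have "i = 0 \<or> i = 1 \<or> i = 2" "j = 0 \<or> j = 1" "k = 0 \<or> k = 1 \<or> k = 2" by arith+
  then show "T14 i j k = (\<Sum>l<4. AA l i * BB l j * CC l k)"
    unfolding sum4 by (elim disjE) (simp_all add: T14_def AA_def BB_def CC_def eV_def)
qed

lemma lower:
  fixes r :: nat and S :: "nat \<Rightarrow> nat \<Rightarrow> nat \<Rightarrow> nat \<Rightarrow> quat"
  assumes r: "r < 4"
    and S: "\<forall>l<r. simple_tensor 3 2 3 (S l)"
    and T: "\<forall>i<3. \<forall>j<2. \<forall>k<3. T14 i j k = (\<Sum>l<r. S l i j k)"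
  shows False
proof -
  have "\<forall>l\<in>{..<r}. \<exists>x. \<forall>i<3. \<forall>j<2. \<forall>k<3. S l i j k = fst x i * fst (snd x) j * snd (snd x) k"
  proof
    fix l assume "l \<in> {..<r}"
    then have "simple_tensor 3 2 3 (S l)" using S by blast
    then obtain a b c :: "nat \<Rightarrow> quat" where "\<forall>i<3. \<forall>j<2. \<forall>k<3. S l i j k = a i * b j * c k"
      unfolding simple_tensor_def by blast
    then show "\<exists>x. \<forall>i<3. \<forall>j<2. \<forall>k<3. S l i j k = fst x i * fst (snd x) j * snd (snd x) k"
      by (intro exI[of _ "(a, b, c)"]) simp
  qed
  from bchoice[OF this] obtain f where f: "\<forall>l\<in>{..<r}. \<forall>i<3. \<forall>j<2. \<forall>k<3. S l i j k = fst (f l) i * fst (snd (f l)) j * snd (snd (f l)) k"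
    by blast
  define a where "a l = (if l < r then fst (f l) else (\<lambda>_. 0))" for l
  define b where "b l = fst (snd (f l))" for l
  define c where "c l = snd (snd (f l))" for l
  have "\<forall>i<3. \<forall>j<2. \<forall>k<3. T14 i j k = (\<Sum>l<(3::nat). a l i * b l j * c l k)"
  proof (intro allI impI)
    fix i j k :: nat assume ijk: "i < 3" "j < 2" "k < 3"
    have "(\<Sum>l<(3::nat). a l i * b l j * c l k) = (\<Sum>l<r. a l i * b l j * c l k)"
    proof (rule sum.mono_neutral_right)
      show "{..<r} \<subseteq> {..<(3::nat)}" using r by auto
      show "\<forall>l\<in>{..<(3::nat)} - {..<r}. a l i * b l j * c l k = 0" by (simp add: a_def)
    qed simp
    also have "\<dots> = (\<Sum>l<r. S l i j k)"
    proof (rule sum.cong)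
      fix l assume "l \<in> {..<r}"
      then show "a l i * b l j * c l k = S l i j k" using f ijk by (simp add: a_def b_def c_def)
    qed simp
    finally show "T14 i j k = (\<Sum>l<(3::nat). a l i * b l j * c l k)" using T ijk by simp
  qed
  then show False using no3 by blast
qed

theorem mainTheorem14:
  shows "tensor_rank 3 2 3 T14 = 4"
  unfolding tensor_rank_def
proof (rule Least_equality)
  show "\<exists>S :: nat \<Rightarrow> nat \<Rightarrow> nat \<Rightarrow> nat \<Rightarrow> quat.
      (\<forall>l<4. simple_tensor 3 2 3 (S l)) \<and>
      (\<forall>i<3. \<forall>j<2. \<forall>k<3. T14 i j k = (\<Sum>l<4. S l i j k))" by (rule upper)
next
  fix y :: nat
  assume "\<exists>S :: nat \<Rightarrow> nat \<Rightarrow> nat \<Rightarrow> nat \<Rightarrow> quat.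
      (\<forall>l<y. simple_tensor 3 2 3 (S l)) \<and>
      (\<forall>i<3. \<forall>j<2. \<forall>k<3. T14 i j k = (\<Sum>l<y. S l i j k))"
  then obtain S :: "nat \<Rightarrow> nat \<Rightarrow> nat \<Rightarrow> nat \<Rightarrow> quat" where
    S1: "\<forall>l<y. simple_tensor 3 2 3 (S l)" and
    S2: "\<forall>i<3. \<forall>j<2. \<forall>k<3. T14 i j k = (\<Sum>l<y. S l i j k)" by blast
  show "4 \<le> y"
  proof (rule ccontr)
    assume "\<not> 4 \<le> y"
    then have "y < 4" by simp
    from lower[OF this S1 S2] show False .
  qed
qed

end
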